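(* Consider Matching Pennies in the unconstrained setting with the Euclidean regularizer, and suppose both players use OFTRL (optimistic weight $n=1$) with any time delay $m\ge 1$, started from an initial condition that is not the equilibrium (i.e. $(\Delta x_1^1,\Delta x_2^1)\neq(0,0)$ where $\Delta x_i^t=\langle\boldsymbol{x}_i^t,\mathbf{c}\rangle$). Then with learning rate $\eta=O(1/\sqrt{T})$ (sufficiently small), the total regret satisfies $\textsc{RegTot}(T)=\Omega(\sqrt{T})$, treating the size $D$ of the comparator set as a constant.
   Context: Matching Pennies: two players with $\boldsymbol{u}_1=\boldsymbol{A}\boldsymbol{x}_2$, $\boldsymbol{u}_2=-\boldsymbol{A}^{\rm T}\boldsymbol{x}_1$, $\boldsymbol{A}=\begin{pmatrix}1&-1\\-1&1\end{pmatrix}=\mathbf{c}\mathbf{c}^{\rm T}$, $\mathbf{c}=(1,-1)^{\rm T}$. Unconstrained setting: strategies $\boldsymbol{x}_i\in\mathbb{R}^2$. Euclidean regularizer $h(\boldsymbol{x})=\|\boldsymbol{x}\|_2^2/2$. Time-delayed weighted optimistic FTRL with delay $m\in\mathbb{N}$ and weight $n\in\mathbb{N}$ (OFTRL is the case $n=1$): with $\boldsymbol{u}_i^t=\boldsymbol{u}_i(\boldsymbol{x}^t)$ for $t\ge1$ and $\boldsymbol{u}_i^t=\boldsymbol{0}$ for $t\le0$, the strategies evolve by $\boldsymbol{x}_i^{t+1}=\boldsymbol{x}_i^{t}+\eta\boldsymbol{u}_i^{t-m}+n\eta(\boldsymbol{u}_i^{t-m}-\boldsymbol{u}_i^{t-m-1})$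 (the unconstrained Euclidean form of $\boldsymbol{x}_i^{t+1}=\arg\max_{\boldsymbol{x}}\eta\langle\boldsymbol{x},\sum_{s=1}^{t-m}\boldsymbol{u}_i^s+n\boldsymbol{u}_i^{t-m}\rangle-h(\boldsymbol{x})$). Total regret: $\textsc{RegTot}(T)=\max_{\boldsymbol{x}}\sum_{i=1,2}\sum_{t=1}^{T}\langle\boldsymbol{x}_i-\boldsymbol{x}_i^t,\boldsymbol{u}_i^t\rangle$, where in the unconstrained setting the comparator $\boldsymbol{x}_i$ ranges over $\{\boldsymbol{x}_i:\|\boldsymbol{x}_i\|_1\le \frac1T\sum_{t=1}^T\|\boldsymbol{x}_i^t\|_1\}$, and $D:=\min_{i}\|\boldsymbol{x}_i\|_1$ for the maximizing comparator. *)

theory Defs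
  imports "HOL-Analysis.Analysis"
begin

text \<open>Matching Pennies, unconstrained setting, Euclidean regularizer.\<close>

definition cvec :: "real^2" where
  "cvec = vector [1, -1]"

definition Amat :: "real^2^2" where
  "Amat = (\<chi> i j. cvec $ i * cvec $ j)"

definition util1 :: "real^2 \<Rightarrow> real^2 \<Rightarrow> real^2" where
  "util1 x1 x2 = Amat *v x2"

definition util2 :: "real^2 \<Rightarrow> real^2 \<Rightarrow> real^2" where
  "util2 x1 x2 = - (transpose Amat *v x1)"

definition l1norm :: "real^2 \<Rightarrow> real" where
  "l1norm x = (\<Sum>i\<in>UNIV. \<bar>x $ i\<bar>)"

text \<open>Time-delayed weighted OFTRL (unconstrained Euclidean form), delay m, weight n,
  learning rate eta, initial strategies (a,b) at time t = 1:
  x^{t+1} = x^t + eta u^{t-m} + n eta (u^{t-m} - u^{t-m-1}), with u^k = 0 for k \<le> 0.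
  Here t \<le> 1 returns the initial condition (t = 0 is unused).\<close>
function oftrl_traj :: "nat \<Rightarrow> nat \<Rightarrow> real \<Rightarrow> real^2 \<Rightarrow> real^2 \<Rightarrow> nat \<Rightarrow> (real^2) \<times> (real^2)"
  where
  "oftrl_traj m n eta a b t =
    (if t \<le> 1 then (a, b) else
      (let s = t - 1;
           xs = oftrl_traj m n eta a b s;
           g = (if m < s then oftrl_traj m n eta a b (s - m) else (0, 0));
           h = (if m + 1 < s then oftrl_traj m n eta a b (s - m - 1) else (0, 0));
           g1 = (if m < s then util1 (fst g) (snd g) else 0);
           g2 = (if m < s then util2 (fst g) (snd g) else 0);
           h1 = (if m + 1 < s then util1 (fst h) (snd h) else 0);
           h2 = (if m + 1 < s then util2 (fst h) (snd h) else 0)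
       in (fst xs + eta *\<^sub>R g1 + (real n * eta) *\<^sub>R (g1 - h1),
           snd xs + eta *\<^sub>R g2 + (real n * eta) *\<^sub>R (g2 - h2))))"
  by pat_completeness auto
termination
  by (relation "Wellfounded.measure (\<lambda>(m, n, eta, a, b, t). t)") auto

definition RegTot :: "nat \<Rightarrow> nat \<Rightarrow> real \<Rightarrow> real^2 \<Rightarrow> real^2 \<Rightarrow> nat \<Rightarrow> real" where
  "RegTot m n eta a b T =
    (let X1 = (\<lambda>t. fst (oftrl_traj m n eta a b t));
         X2 = (\<lambda>t. snd (oftrl_traj m n eta a b t));
         U1 = (\<lambda>t. util1 (X1 t) (X2 t));
         U2 = (\<lambda>t. util2 (X1 t) (X2 t));
         R1 = (\<Sum>t=1..T. l1norm (X1 t)) / real T;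
         R2 = (\<Sum>t=1..T. l1norm (X2 t)) / real T
     in Sup {(\<Sum>t=1..T. (y1 - X1 t) \<bullet> U1 t) + (\<Sum>t=1..T. (y2 - X2 t) \<bullet> U2 t) |
               y1 y2. l1norm y1 \<le> R1 \<and> l1norm y2 \<le> R2})"

end

theory Submission
  imports Defs
begin


lemma cvec1[simp]: "cvec $ 1 = 1" and cvec2[simp]: "cvec $ 2 = -1"
  by (simp_all add: cvec_def)

lemma cvec_inner: "x \<bullet> cvec = x $ 1 - x $ 2"
  by (simp add: inner_vec_def sum_2)

lemma cvec_cvec: "cvec \<bullet> cvec = 2"
  by (simp add: cvec_def inner_vec_def sum_2)

lemma cvec2x: "(cvec * 2) \<bullet> cvec = 4"
proof -
  have "cvec * 2 = 2 *\<^sub>R cvec" by (simp add: vec_eq_iff)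
  then show ?thesis by (simp add: cvec_cvec)
qed

lemma Amat_mult: "Amat *v x = (x \<bullet> cvec) *\<^sub>R cvec"
proof -
  have "\<forall>i. (Amat *v x) $ i = ((x \<bullet> cvec) *\<^sub>R cvec) $ i"
    apply (rule allI) subgoal for i using exhaust_2[of i]
    by (auto simp: Amat_def matrix_vector_mult_def sum_2 cvec_inner algebra_simps) done
  then show ?thesis by (simp add: vec_eq_iff)
qed

lemma Amat_T: "transpose Amat = Amat"
  by (simp add: Amat_def transpose_def vec_eq_iff mult.commute)

lemma util1_eq: "util1 x y = (y \<bullet> cvec) *\<^sub>R cvec"
  by (simp add: util1_def Amat_mult)

lemma util2_eq: "util2 x y = - ((x \<bullet> cvec) *\<^sub>R cvec)"
  by (simp add: util2_def Amat_T Amat_mult)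

lemma l1_ge: "\<bar>x \<bullet> cvec\<bar> \<le> l1norm x"
  by (simp add: l1norm_def sum_2 cvec_inner)

lemma l1_axis: "l1norm (s *\<^sub>R axis 1 (1::real)) = \<bar>s\<bar>"
  by (simp add: l1norm_def sum_2 axis_def)

lemma axis_c: "(s *\<^sub>R axis 1 (1::real)) \<bullet> cvec = s"
  by (simp add: cvec_inner axis_def)

lemma traj_step:
  fixes m :: nat and eta :: real and a b :: "real^2" and k :: nat
  defines "X \<equiv> oftrl_traj m 1 eta a b"
  shows "fst (X (Suc (Suc k))) \<bullet> cvec = fst (X (Suc k)) \<bullet> cvec
          + 2 * eta * (2 * (if m \<le> k then snd (X (Suc (k - m))) \<bullet> cvec else 0)
                      - (if m < k then snd (X (Suc (k - Suc m))) \<bullet> cvec else 0))"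
    and "snd (X (Suc (Suc k))) \<bullet> cvec = snd (X (Suc k)) \<bullet> cvec
          - 2 * eta * (2 * (if m \<le> k then fst (X (Suc (k - m))) \<bullet> cvec else 0)
                      - (if m < k then fst (X (Suc (k - Suc m))) \<bullet> cvec else 0))"
proof -
  have e: "X (Suc (Suc k)) = (let s = Suc k;
           xs = X s;
           g = (if m < s then X (s - m) else (0, 0));
           h = (if m + 1 < s then X (s - m - 1) else (0, 0));
           g1 = (if m < s then util1 (fst g) (snd g) else 0);
           g2 = (if m < s then util2 (fst g) (snd g) else 0);
           h1 = (if m + 1 < s then util1 (fst h) (snd h) else 0);
           h2 = (if m + 1 < s then util2 (fst h) (snd h) else 0)
       in (fst xs + eta *\<^sub>R g1 + (real 1 * eta) *\<^sub>R (g1 - h1),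
           snd xs + eta *\<^sub>R g2 + (real 1 * eta) *\<^sub>R (g2 - h2)))"
    unfolding X_def by (subst oftrl_traj.simps) simp
  define G where "G = (if m \<le> k then X (Suc (k - m)) else (0,0))"
  define H where "H = (if m < k then X (Suc (k - Suc m)) else (0,0))"
  have eG: "(if m \<le> k then X (Suc k - m) else (0, 0)) = G"
    by (auto simp: G_def Suc_diff_le)
  have eH: "(if m < k then X (Suc k - m - 1) else (0, 0)) = H"
    by (auto simp: H_def) (metis Suc_diff_Suc diff_diff_left plus_1_eq_Suc)
  have c1: "(m < Suc k) = (m \<le> k)" "(m + 1 < Suc k) = (m < k)" by auto
  have e2: "X (Suc (Suc k)) =
     (fst (X (Suc k)) + eta *\<^sub>R (if m \<le> k then util1 (fst G) (snd G) else 0)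
        + eta *\<^sub>R ((if m \<le> k then util1 (fst G) (snd G) else 0) - (if m < k then util1 (fst H) (snd H) else 0)),
      snd (X (Suc k)) + eta *\<^sub>R (if m \<le> k then util2 (fst G) (snd G) else 0)
        + eta *\<^sub>R ((if m \<le> k then util2 (fst G) (snd G) else 0) - (if m < k then util2 (fst H) (snd H) else 0)))"
    unfolding e Let_def c1 unfolding eG eH by simp
  show "fst (X (Suc (Suc k))) \<bullet> cvec = fst (X (Suc k)) \<bullet> cvec
          + 2 * eta * (2 * (if m \<le> k then snd (X (Suc (k - m))) \<bullet> cvec else 0)
                      - (if m < k then snd (X (Suc (k - Suc m))) \<bullet> cvec else 0))"
    unfolding e2 by (simp add: G_def H_def util1_eq inner_add_left inner_diff_left cvec_cvec cvec2x algebra_simps)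
  show "snd (X (Suc (Suc k))) \<bullet> cvec = snd (X (Suc k)) \<bullet> cvec
          - 2 * eta * (2 * (if m \<le> k then fst (X (Suc (k - m))) \<bullet> cvec else 0)
                      - (if m < k then fst (X (Suc (k - Suc m))) \<bullet> cvec else 0))"
    unfolding e2 by (simp add: G_def H_def util2_eq inner_add_left inner_diff_left cvec_cvec cvec2x algebra_simps)
qed



definition Bf :: "(nat \<Rightarrow> complex) \<Rightarrow> nat \<Rightarrow> nat \<Rightarrow> complex" where
  "Bf Z m k = (if m \<le> k then Z (k - m) else 0)"
definition Cf :: "(nat \<Rightarrow> complex) \<Rightarrow> nat \<Rightarrow> nat \<Rightarrow> complex" where
  "Cf Z m k = (if m < k then Z (k - Suc m) else 0)"
definition Ef :: "(nat \<Rightarrow> complex) \<Rightarrow> nat \<Rightarrow> nat \<Rightarrow> complex" where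
  "Ef Z m k = 2 * Bf Z m k - Cf Z m k - Z k"

lemma step_sum: "(\<Sum>j<n. if j < L then A else 0) = real (min n L) * (A::real)"
  by (induction n) (auto simp: min_def algebra_simps)

lemma step_sum_le:
  fixes g :: "nat \<Rightarrow> real"
  assumes "\<And>j. j < n \<Longrightarrow> g j \<le> (if j < L then A else 0) + Bc" "A \<ge> 0"
  shows "sum g {..<n} \<le> real L * A + real n * Bc"
proof -
  have "sum g {..<n} \<le> (\<Sum>j<n. (if j < L then A else 0) + Bc)"
    by (rule sum_mono) (use assms in auto)
  also have "\<dots> = real (min n L) * A + real n * Bc"
    by (simp add: sum.distrib step_sum)
  also have "\<dots> \<le> real L * A + real n * Bc"
    using assms(2) by (simp add: mult_right_mono)
  finally show ?thesis .
qed

lemma inc_identity: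
  fixes z e :: complex and eta :: real
  shows "cmod (z - 2 * \<i> * of_real eta * (z + e)) ^ 2 - cmod z ^ 2
     = 4 * eta * Im (cnj z * e) + 4 * eta^2 * cmod (z + e) ^ 2"
  by (simp only: cmod_power2) (simp add: algebra_simps power2_eq_square)

lemma sq_identity:
  fixes z e :: complex and eta :: real
  shows "(z - 2 * \<i> * of_real eta * (z + e)) ^ 2 - z ^ 2
     = - 4 * \<i> * of_real eta * z ^ 2 + (- 4 * \<i> * of_real eta * z * e + (2 * \<i> * of_real eta * (z + e)) ^ 2)"
  by (simp add: algebra_simps power2_eq_square)

lemma Im_cnj_le: "\<bar>Im (cnj z * e)\<bar> \<le> cmod z * cmod e"
  by (metis abs_Im_le_cmod complex_mod_cnj norm_mult)

lemma normsq_lower: "cmod (z + e) ^ 2 \<ge> cmod z ^ 2 - 2 * cmod z * cmod e"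
proof -
  have "cmod (z + e) ^ 2 = cmod z ^ 2 + 2 * Re (cnj z * e) + cmod e ^ 2"
    by (simp only: cmod_power2) (simp add: algebra_simps power2_eq_square)
  moreover have "\<bar>Re (cnj z * e)\<bar> \<le> cmod z * cmod e"
    by (metis abs_Re_le_cmod complex_mod_cnj norm_mult)
  then have "Re (cnj z * e) \<ge> - (cmod z * cmod e)" by linarith
  ultimately show ?thesis using zero_le_power2[of "cmod e"] by linarith
qed

locale osc =
  fixes Z :: "nat \<Rightarrow> complex" and m :: nat and eta :: real
  assumes eta_pos: "0 < eta" and m_pos: "1 \<le> m"
    and rec: "\<And>k. Z (Suc k) = Z k - 2 * \<i> * of_real eta * (2 * Bf Z m k - Cf Z m k)"
begin

abbreviation "E \<equiv> Ef Z m"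
abbreviation "D k \<equiv> Z (Suc k) - Z k"

lemma rec2: "Z (Suc k) = Z k - 2 * \<i> * of_real eta * (Z k + E k)"
  by (simp add: rec Ef_def)

lemma D_eq: "D k = - 2 * \<i> * of_real eta * (Z k + E k)"
  by (simp add: rec2)

lemma tel: "i \<le> j \<Longrightarrow> Z j - Z i = (\<Sum>l\<in>{i..<j}. D l)"
proof (induction j)
  case 0 then show ?case by simp
next
  case (Suc j)
  show ?case
  proof (cases "i = Suc j")
    case True then show ?thesis by simp
  next
    case False
    then have "i \<le> j" using Suc.prems by simp
    have "(\<Sum>l\<in>{i..<Suc j}. D l) = (\<Sum>l\<in>{i..<j}. D l) + D j"
      using \<open>i \<le> j\<close> by (rule sum.atLeastLessThan_Suc)
    also have "\<dots> = (Z j - Z i) + D j" by (simp only: Suc.IH[OF \<open>i \<le> j\<close>])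
    finally show ?thesis by simp
  qed
qed

context
  fixes K :: nat and M :: real
  assumes bnd: "\<And>j. j \<le> K \<Longrightarrow> cmod (Z j) \<le> M"
begin

lemma M_nonneg: "0 \<le> M"
  using bnd[of 0] norm_ge_zero[of "Z 0"] by linarith

lemma B_bd: "j \<le> K \<Longrightarrow> cmod (Bf Z m j) \<le> M"
  using bnd M_nonneg by (auto simp: Bf_def)

lemma C_bd: "j \<le> K \<Longrightarrow> cmod (Cf Z m j) \<le> M"
  using bnd M_nonneg by (auto simp: Cf_def)

lemma W_bd: "j \<le> K \<Longrightarrow> cmod (2 * Bf Z m j - Cf Z m j) \<le> 3 * M"
proof -
  assume j: "j \<le> K"
  have "cmod (2 * Bf Z m j - Cf Z m j) \<le> cmod (2 * Bf Z m j) + cmod (Cf Z m j)"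
    by (rule norm_triangle_ineq4)
  also have "\<dots> = 2 * cmod (Bf Z m j) + cmod (Cf Z m j)" by (simp add: norm_mult)
  also have "\<dots> \<le> 3 * M" using B_bd[OF j] C_bd[OF j] by linarith
  finally show ?thesis .
qed

lemma D_bd: "j \<le> K \<Longrightarrow> cmod (D j) \<le> 6 * eta * M"
proof -
  assume j: "j \<le> K"
  have "cmod (D j) = 2 * eta * cmod (2 * Bf Z m j - Cf Z m j)"
    using eta_pos by (simp add: rec norm_mult)
  also have "\<dots> \<le> 2 * eta * (3 * M)"
    using W_bd[OF j] eta_pos by (intro mult_left_mono) auto
  finally show ?thesis by simp
qed

lemma E_bd: "j \<le> K \<Longrightarrow> cmod (E j) \<le> 4 * M"
proof -
  assume j: "j \<le> K"
  have "cmod (E j) \<le> cmod (2 * Bf Z m j - Cf Z m j) + cmod (Z j)"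
    unfolding Ef_def by (rule norm_triangle_ineq4)
  then show ?thesis using W_bd[OF j] bnd[OF j] by linarith
qed

lemma Zdiff: "i \<le> j \<Longrightarrow> j \<le> Suc K \<Longrightarrow> cmod (Z j - Z i) \<le> real (j - i) * (6 * eta * M)"
proof -
  assume ij: "i \<le> j" "j \<le> Suc K"
  have "cmod (Z j - Z i) = cmod (\<Sum>l\<in>{i..<j}. D l)" using tel[OF ij(1)] by simp
  also have "\<dots> \<le> (\<Sum>l\<in>{i..<j}. 6 * eta * M)"
    by (rule sum_norm_le) (use ij D_bd in auto)
  also have "\<dots> = real (j - i) * (6 * eta * M)" by simp
  finally show ?thesis .
qed

lemma E1: "m < j \<Longrightarrow> j \<le> K \<Longrightarrow> cmod (E j) \<le> 6 * (real m + 1) * eta * M"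
proof -
  assume j: "m < j" "j \<le> K"
  have s: "Suc (j - Suc m) = j - m" using j by simp
  have "E j = D (j - Suc m) - (Z j - Z (j - m))"
    using j s by (simp add: Ef_def Bf_def Cf_def)
  then have "cmod (E j) \<le> cmod (D (j - Suc m)) + cmod (Z j - Z (j - m))"
    by (simp add: norm_triangle_ineq4)
  also have "\<dots> \<le> 6 * eta * M + real (j - (j - m)) * (6 * eta * M)"
    using D_bd[of "j - Suc m"] Zdiff[of "j - m" j] j by (intro add_mono) auto
  also have "\<dots> = 6 * (real m + 1) * eta * M" using j by (simp add: algebra_simps)
  finally show ?thesis .
qed

lemma term_bd: "j - Suc m \<le> l \<Longrightarrow> l < j \<Longrightarrow> 2 * m + 2 \<le> j \<Longrightarrow> j \<le> K \<Longrightarrow>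
   cmod (- D l - 2 * \<i> * of_real eta * Z j) \<le> 24 * (real m + 1) * eta^2 * M"
proof -
  assume l: "j - Suc m \<le> l" "l < j" "2 * m + 2 \<le> j" "j \<le> K"
  have e: "- D l - 2 * \<i> * of_real eta * Z j = 2 * \<i> * of_real eta * ((E l) - (Z j - Z l))"
    by (simp add: D_eq algebra_simps)
  have "cmod ((E l) - (Z j - Z l)) \<le> cmod (E l) + cmod (Z j - Z l)" by (rule norm_triangle_ineq4)
  also have "\<dots> \<le> 6 * (real m + 1) * eta * M + real (j - l) * (6 * eta * M)"
    using E1[of l] Zdiff[of l j] l by (intro add_mono) auto
  also have "\<dots> \<le> 6 * (real m + 1) * eta * M + (real m + 1) * (6 * eta * M)"
  proof -
    have "real (j - l) \<le> real m + 1" using l by linarith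
    then show ?thesis using M_nonneg eta_pos by (intro add_left_mono mult_right_mono) auto
  qed
  finally have b: "cmod ((E l) - (Z j - Z l)) \<le> 12 * (real m + 1) * eta * M" by (simp add: algebra_simps)
  have "cmod (- D l - 2 * \<i> * of_real eta * Z j) = 2 * eta * cmod ((E l) - (Z j - Z l))"
    using eta_pos by (subst e) (simp add: norm_mult)
  also have "\<dots> \<le> 2 * eta * (12 * (real m + 1) * eta * M)"
    using b eta_pos by (intro mult_left_mono) auto
  finally show ?thesis by (simp add: power2_eq_square algebra_simps)
qed

lemma E2: "2 * m + 2 \<le> j \<Longrightarrow> j \<le> K \<Longrightarrow>
   cmod (E j - 2 * \<i> * of_real eta * (real m - 1) * Z j) \<le> 24 * (real m + 1)^2 * eta^2 * M"
proof -
  assume j: "2 * m + 2 \<le> j" "j \<le> K"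
  have s: "Suc (j - Suc m) = j - m" using j by simp
  have t: "Z (j - m) - Z j = - (\<Sum>l\<in>{j-m..<j}. D l)"
    using tel[of "j - m" j] by (metis minus_diff_eq diff_le_self)
  have "E j = D (j - Suc m) + (Z (j - m) - Z j)"
    using j s by (simp add: Ef_def Bf_def Cf_def)
  then have Ej: "E j = D (j - Suc m) - (\<Sum>l\<in>{j-m..<j}. D l)"
    unfolding t by simp
  have "E j - 2 * \<i> * of_real eta * (real m - 1) * Z j
      = (\<Sum>l\<in>{j-m..<j}. - D l - 2 * \<i> * of_real eta * Z j) + (D (j - Suc m) + 2 * \<i> * of_real eta * Z j)"
  proof -
    have g: "\<And>f w. (\<Sum>l\<in>{j-m..<j}. - f l - w) = - sum f {j-m..<j} - of_nat m * (w::complex)"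
      using j by (simp add: sum_subtractf sum_negf)
    show ?thesis unfolding g[of D] Ej by (simp add: algebra_simps)
  qed
  also have "cmod \<dots> \<le> cmod (\<Sum>l\<in>{j-m..<j}. - D l - 2 * \<i> * of_real eta * Z j) + cmod (D (j - Suc m) + 2 * \<i> * of_real eta * Z j)"
    by (rule norm_triangle_ineq)
  also have "\<dots> \<le> (\<Sum>l\<in>{j-m..<j}. 24 * (real m + 1) * eta^2 * M) + 24 * (real m + 1) * eta^2 * M"
  proof (rule add_mono)
    show "cmod (\<Sum>l\<in>{j-m..<j}. - D l - 2 * \<i> * of_real eta * Z j) \<le> (\<Sum>l\<in>{j-m..<j}. 24 * (real m + 1) * eta^2 * M)"
    proof (rule sum_norm_le)
      fix l assume "l \<in> {j-m..<j}"
      then show "cmod (- D l - 2 * \<i> * of_real eta * Z j) \<le> 24 * (real m + 1) * eta^2 * M"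
        using j by (intro term_bd) auto
    qed
    have "cmod (D (j - Suc m) + 2 * \<i> * of_real eta * Z j) = cmod (- D (j - Suc m) - 2 * \<i> * of_real eta * Z j)"
    proof -
      have "- D (j - Suc m) - 2 * \<i> * of_real eta * Z j = - (D (j - Suc m) + 2 * \<i> * of_real eta * Z j)"
        by simp
      then show ?thesis by (simp only: norm_minus_cancel)
    qed
    also have "\<dots> \<le> 24 * (real m + 1) * eta^2 * M" using j by (intro term_bd) auto
    finally show "cmod (D (j - Suc m) + 2 * \<i> * of_real eta * Z j) \<le> 24 * (real m + 1) * eta^2 * M" .
  qed
  also have "\<dots> = 24 * (real m + 1)^2 * eta^2 * M"
    using j by (simp add: power2_eq_square algebra_simps)
  finally show ?thesis .
qed


end

lemma D_norm: "cmod (D j) = 2 * eta * cmod (Z j + E j)"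
  using eta_pos by (simp add: D_eq norm_mult)

lemma inc_eq: "cmod (Z (Suc j)) ^ 2 - cmod (Z j) ^ 2 = 4 * eta * Im (cnj (Z j) * E j) + cmod (D j) ^ 2"
proof -
  have "cmod (Z (Suc j)) ^ 2 - cmod (Z j) ^ 2 = 4 * eta * Im (cnj (Z j) * E j) + 4 * eta^2 * cmod (Z j + E j) ^ 2"
    unfolding rec2 by (rule inc_identity)
  also have "4 * eta^2 * cmod (Z j + E j) ^ 2 = cmod (D j) ^ 2"
    unfolding D_norm by (simp add: power_mult_distrib)
  finally show ?thesis .
qed

abbreviation "F j \<equiv> Z (Suc j) ^ 2 - Z j ^ 2 + 4 * \<i> * of_real eta * Z j ^ 2"

lemma F_eq: "F j = - 4 * \<i> * of_real eta * Z j * E j + D j ^ 2"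
proof -
  have "Z (Suc j) ^ 2 - Z j ^ 2 = - 4 * \<i> * of_real eta * Z j ^ 2 + (- 4 * \<i> * of_real eta * Z j * E j + (2 * \<i> * of_real eta * (Z j + E j)) ^ 2)"
    unfolding rec2 by (rule sq_identity)
  moreover have "(2 * \<i> * of_real eta * (Z j + E j)) ^ 2 = D j ^ 2"
    unfolding D_eq by (simp add: power2_eq_square)
  ultimately show ?thesis by simp
qed

context
  fixes K :: nat and M :: real
  assumes bnd: "\<And>j. j \<le> K \<Longrightarrow> cmod (Z j) \<le> M"
begin

lemma EZ_bd: "j \<le> K \<Longrightarrow> 4 * eta * (cmod (Z j) * cmod (E j)) \<le> (if j < m + 1 then 16 * eta * M^2 else 0) + 24 * (real m + 1) * eta^2 * M^2"
proof -
  assume j: "j \<le> K"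
  have M0: "0 \<le> M" using M_nonneg[OF bnd] .
  have zb: "cmod (Z j) \<le> M" using bnd[OF j] .
  show ?thesis
  proof (cases "j < m + 1")
    case True
    have "cmod (Z j) * cmod (E j) \<le> M * (4 * M)"
      using zb E_bd[OF bnd j] M0 by (intro mult_mono) auto
    then have "4 * eta * (cmod (Z j) * cmod (E j)) \<le> 4 * eta * (M * (4 * M))"
      using eta_pos by (intro mult_left_mono) auto
    moreover have "0 \<le> 24 * (real m + 1) * eta^2 * M^2" by simp
    ultimately show ?thesis using True by (simp add: power2_eq_square algebra_simps)
  next
    case False
    have "cmod (Z j) * cmod (E j) \<le> M * (6 * (real m + 1) * eta * M)"
      using zb E1[OF bnd _ j] False M0 by (intro mult_mono) auto
    then have "4 * eta * (cmod (Z j) * cmod (E j)) \<le> 4 * eta * (M * (6 * (real m + 1) * eta * M))"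
      using eta_pos by (intro mult_left_mono) auto
    then show ?thesis using False by (simp add: power2_eq_square algebra_simps)
  qed
qed

lemma Dsq_bd: "j \<le> K \<Longrightarrow> cmod (D j) ^ 2 \<le> 36 * eta^2 * M^2"
proof -
  assume j: "j \<le> K"
  have "cmod (D j) ^ 2 \<le> (6 * eta * M) ^ 2"
    using D_bd[OF bnd j] by (intro power_mono) auto
  then show ?thesis by (simp add: power_mult_distrib)
qed

lemma inc_up: "j \<le> K \<Longrightarrow> cmod (Z (Suc j)) ^ 2 - cmod (Z j) ^ 2 \<le>
   (if j < m + 1 then 16 * eta * M^2 else 0) + (24 * (real m + 1) + 36) * eta^2 * M^2"
proof -
  assume j: "j \<le> K"
  have "Im (cnj (Z j) * E j) \<le> cmod (Z j) * cmod (E j)" using Im_cnj_le[of "Z j" "E j"] by linarith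
  then have "4 * eta * Im (cnj (Z j) * E j) \<le> 4 * eta * (cmod (Z j) * cmod (E j))"
    using eta_pos by (intro mult_left_mono) auto
  then show ?thesis using inc_eq[of j] EZ_bd[OF j] Dsq_bd[OF j] by (simp add: algebra_simps)
qed

lemma F_bd: "j \<le> K \<Longrightarrow> cmod (F j) \<le>
   (if j < m + 1 then 16 * eta * M^2 else 0) + (24 * (real m + 1) + 36) * eta^2 * M^2"
proof -
  assume j: "j \<le> K"
  have "cmod (F j) \<le> cmod (- 4 * \<i> * of_real eta * Z j * E j) + cmod (D j ^ 2)"
    unfolding F_eq by (rule norm_triangle_ineq)
  also have "cmod (- 4 * \<i> * of_real eta * Z j * E j) = 4 * eta * (cmod (Z j) * cmod (E j))"
    using eta_pos by (simp add: norm_mult)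
  also have "cmod (D j ^ 2) = cmod (D j) ^ 2" by (simp add: norm_power)
  finally show ?thesis using EZ_bd[OF j] Dsq_bd[OF j] by (simp add: algebra_simps)
qed

lemma inc_lo_early: "j \<le> K \<Longrightarrow> cmod (Z (Suc j)) ^ 2 - cmod (Z j) ^ 2 \<ge> - 16 * eta * M^2"
proof -
  assume j: "j \<le> K"
  have M0: "0 \<le> M" using M_nonneg[OF bnd] .
  have "cmod (Z j) * cmod (E j) \<le> M * (4 * M)"
    using bnd[OF j] E_bd[OF bnd j] M0 by (intro mult_mono) auto
  then have "- Im (cnj (Z j) * E j) \<le> M * (4 * M)" using Im_cnj_le[of "Z j" "E j"] by linarith
  then have "4 * eta * (- Im (cnj (Z j) * E j)) \<le> 4 * eta * (M * (4 * M))"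
    using eta_pos by (intro mult_left_mono) auto
  then have "4 * eta * Im (cnj (Z j) * E j) \<ge> - (16 * eta * M^2)"
    by (simp add: power2_eq_square algebra_simps)
  then show ?thesis using inc_eq[of j] zero_le_power2[of "cmod (D j)"] by linarith
qed

lemma inc_lo_late: "2 * m + 2 \<le> j \<Longrightarrow> j \<le> K \<Longrightarrow>
  cmod (Z (Suc j)) ^ 2 - cmod (Z j) ^ 2 \<ge> 4 * eta^2 * cmod (Z j) ^ 2 - 144 * (real m + 1)^2 * eta^3 * M^2"
proof -
  assume j: "2 * m + 2 \<le> j" "j \<le> K"
  have M0: "0 \<le> M" using M_nonneg[OF bnd] .
  have zb: "cmod (Z j) \<le> M" using bnd[OF j(2)] .
  define e0 where "e0 = 2 * \<i> * of_real eta * (real m - 1) * Z j"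
  have i0: "Im (cnj (Z j) * e0) = 2 * eta * (real m - 1) * cmod (Z j) ^ 2"
    unfolding e0_def by (simp only: cmod_power2) (simp add: algebra_simps power2_eq_square)
  have i0p: "Im (cnj (Z j) * e0) \<ge> 0"
    unfolding i0 using eta_pos m_pos by simp
  have "cmod (Z j) * cmod (E j - e0) \<le> M * (24 * (real m + 1)^2 * eta^2 * M)"
    using zb E2[OF bnd j] M0 unfolding e0_def by (intro mult_mono) auto
  then have "- Im (cnj (Z j) * (E j - e0)) \<le> M * (24 * (real m + 1)^2 * eta^2 * M)"
    using Im_cnj_le[of "Z j" "E j - e0"] by linarith
  moreover have "Im (cnj (Z j) * E j) = Im (cnj (Z j) * e0) + Im (cnj (Z j) * (E j - e0))"
    by (simp add: algebra_simps)
  ultimately have a: "Im (cnj (Z j) * E j) \<ge> - (24 * (real m + 1)^2 * eta^2 * M^2)"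
    using i0p by (simp add: power2_eq_square algebra_simps)
  have "4 * eta * Im (cnj (Z j) * E j) \<ge> 4 * eta * (- (24 * (real m + 1)^2 * eta^2 * M^2))"
    using a eta_pos by (intro mult_left_mono) auto
  then have a2: "4 * eta * Im (cnj (Z j) * E j) \<ge> - 96 * (real m + 1)^2 * eta^3 * M^2"
    by (simp add: power2_eq_square power3_eq_cube algebra_simps)
  have "cmod (D j) ^ 2 = 4 * eta^2 * cmod (Z j + E j) ^ 2"
    unfolding D_norm by (simp add: power_mult_distrib)
  also have "\<dots> \<ge> 4 * eta^2 * (cmod (Z j) ^ 2 - 2 * cmod (Z j) * cmod (E j))"
    using normsq_lower[of "Z j" "E j"] by (intro mult_left_mono) auto
  finally have d1: "cmod (D j) ^ 2 \<ge> 4 * eta^2 * (cmod (Z j) ^ 2 - 2 * cmod (Z j) * cmod (E j))" .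
  have "cmod (Z j) * cmod (E j) \<le> M * (6 * (real m + 1) * eta * M)"
    using zb E1[OF bnd _ j(2)] j M0 by (intro mult_mono) auto
  then have "8 * eta^2 * (cmod (Z j) * cmod (E j)) \<le> 8 * eta^2 * (M * (6 * (real m + 1) * eta * M))"
    by (intro mult_left_mono) auto
  then have d2: "cmod (D j) ^ 2 \<ge> 4 * eta^2 * cmod (Z j) ^ 2 - 48 * (real m + 1) * eta^3 * M^2"
    using d1 by (simp add: power2_eq_square power3_eq_cube algebra_simps)
  have "48 * (real m + 1) * eta^3 * M^2 \<le> 48 * (real m + 1)^2 * eta^3 * M^2"
  proof -
    have "real m + 1 \<le> (real m + 1)^2" by (simp add: power2_eq_square)
    then show ?thesis using eta_pos by (intro mult_right_mono) auto
  qed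
  then show ?thesis using inc_eq[of j] a2 d2 by (simp add: algebra_simps)
qed

end

lemma sumB: "(\<Sum>k<n + m. Bf Z m k) = (\<Sum>j<n. Z j)"
proof (induction n)
  case 0 then show ?case by (simp add: Bf_def)
next
  case (Suc n) then show ?case by (simp add: Bf_def)
qed

lemma sumC: "(\<Sum>k<n + m + 1. Cf Z m k) = (\<Sum>j<n. Z j)"
proof (induction n)
  case 0 then show ?case by (simp add: Cf_def)
next
  case (Suc n) then show ?case by (simp add: Cf_def)
qed


lemma telsq: "cmod (Z n) ^ 2 - cmod (Z 0) ^ 2 = (\<Sum>j<n. cmod (Z (Suc j)) ^ 2 - cmod (Z j) ^ 2)"
  by (rule sum_lessThan_telescope[symmetric])

theorem main:
  fixes N :: nat and r :: real
  assumes r: "cmod (Z 0) = r" "0 < r"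
    and c1: "128 * (real m + 1) * eta \<le> 1/4"
    and c2: "real N * (24 * real m + 60) * eta^2 \<le> 1/2"
    and c3: "576 * (real m + 1)^2 * real N * eta^3 \<le> 1/4"
    and c4: "576 * (real m + 1)^2 * eta \<le> 1/2"
    and c5: "(2 * real m + 2) * (64 + 2 * eta) \<le> real N * eta"
    and c7: "48 * (real m + 3) \<le> real N * eta"
  shows "(\<Sum>k<N. \<bar>Re (Z k)\<bar>) \<ge> real N * r / 16"
    and "(\<Sum>k<N. \<bar>Im (Z k)\<bar>) \<ge> real N * r / 16"
    and "cmod (\<Sum>k<N. Z k) \<ge> real N * eta * r / 24"
proof -
  have e0: "0 < eta" by (rule eta_pos)
  have r0: "0 \<le> r" using r by simp
  have sumbd: "(\<Sum>j<n. g j) \<le> 3 * r^2"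
    if n: "n \<le> N" and bndk: "\<And>j. j < n \<Longrightarrow> g j \<le> (if j < m + 1 then 16 * eta * (2*r)^2 else 0) + (24 * (real m + 1) + 36) * eta^2 * (2*r)^2"
    for n and g :: "nat \<Rightarrow> real"
  proof -
    have "(\<Sum>j<n. g j) \<le> real (m+1) * (16 * eta * (2*r)^2) + real n * ((24 * (real m + 1) + 36) * eta^2 * (2*r)^2)"
      by (rule step_sum_le) (use bndk e0 in auto)
    also have "\<dots> \<le> 3 * r^2"
    proof -
      have a: "real (m+1) * (16 * eta * (2*r)^2) = (16 * (real m + 1) * eta) * (4 * r^2)"
        by (simp add: power2_eq_square algebra_simps)
      have "16 * (real m + 1) * eta \<le> 1/32" using c1 by (simp only: algebra_simps)
      then have "(16 * (real m + 1) * eta) * (4 * r^2) \<le> (1/32) * (4 * r^2)"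
        by (intro mult_right_mono) auto
      have b: "real n * ((24 * (real m + 1) + 36) * eta^2 * (2*r)^2) = (real n * (24 * real m + 60) * eta^2) * (4 * r^2)"
        by (simp add: power2_eq_square algebra_simps)
      have "real n * (24 * real m + 60) * eta^2 \<le> real N * (24 * real m + 60) * eta^2"
        using n by (intro mult_right_mono) auto
      then have "real n * (24 * real m + 60) * eta^2 \<le> 1/2" using c2 by linarith
      then have "(real n * (24 * real m + 60) * eta^2) * (4 * r^2) \<le> (1/2) * (4 * r^2)"
        by (intro mult_right_mono) auto
      note bb = this
      have "real (m+1) * (16 * eta * (2*r)^2) + real n * ((24 * (real m + 1) + 36) * eta^2 * (2*r)^2)
          = (16 * (real m + 1) * eta) * (4 * r^2) + (real n * (24 * real m + 60) * eta^2) * (4 * r^2)"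
        by (simp only: a b)
      also have "\<dots> \<le> (1/32) * (4 * r^2) + (1/2) * (4 * r^2)"
        by (rule add_mono) fact+
      also have "\<dots> \<le> 3 * r^2" using zero_le_power2[of r] by linarith
      finally show ?thesis .
    qed
    finally show ?thesis .
  qed
  have up: "\<forall>j\<le>k. cmod (Z j) \<le> 2 * r" if "k \<le> N" for k
    using that
  proof (induction k)
    case 0 then show ?case using r by simp
  next
    case (Suc k)
    then have bk: "\<And>j. j \<le> k \<Longrightarrow> cmod (Z j) \<le> 2 * r" by auto
    have "cmod (Z (Suc k)) ^ 2 - r ^ 2 = (\<Sum>j<Suc k. cmod (Z (Suc j)) ^ 2 - cmod (Z j) ^ 2)"
      using telsq[of "Suc k"] r by simp
    also have "\<dots> \<le> 3 * r^2"
    proof (rule sumbd)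
      show "Suc k \<le> N" using Suc.prems .
      fix j assume "j < Suc k"
      then have "j \<le> k" by simp
      then show "cmod (Z (Suc j)) ^ 2 - cmod (Z j) ^ 2 \<le> (if j < m + 1 then 16 * eta * (2*r)^2 else 0) + (24 * (real m + 1) + 36) * eta^2 * (2*r)^2"
        using inc_up[OF bk, of j] by simp
    qed
    finally have h: "cmod (Z (Suc k)) ^ 2 - r ^ 2 \<le> 3 * r^2" .
    have "(2 * r) ^ 2 = 4 * r ^ 2" by (simp add: power2_eq_square)
    then have "cmod (Z (Suc k)) ^ 2 \<le> (2 * r) ^ 2" using h by linarith
    moreover have "0 \<le> 2 * r" using r0 by simp
    ultimately have "cmod (Z (Suc k)) \<le> 2 * r" by (rule power2_le_imp_le)
    note this
    show ?case
    proof (intro allI impI)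
      fix j assume "j \<le> Suc k"
      then consider "j \<le> k" | "j = Suc k" by linarith
      then show "cmod (Z j) \<le> 2 * r"
        by cases (use bk \<open>cmod (Z (Suc k)) \<le> 2 * r\<close> in auto)
    qed
  qed
  have bN: "cmod (Z j) \<le> 2 * r" if "j \<le> N" for j
  proof -
    have "\<forall>j\<le>N. cmod (Z j) \<le> 2 * r" by (rule up) simp
    then show ?thesis using that by simp
  qed
  have lo: "cmod (Z k) ^ 2 \<ge> r^2 / 2" if k: "k \<le> N" for k
  proof -
    have "(\<Sum>j<k. - (cmod (Z (Suc j)) ^ 2 - cmod (Z j) ^ 2))
        \<le> real (2*m+2) * (16 * eta * (2*r)^2) + real k * (144 * (real m + 1)^2 * eta^3 * (2*r)^2)"
    proof (rule step_sum_le)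
      fix j assume j: "j < k"
      show "- (cmod (Z (Suc j)) ^ 2 - cmod (Z j) ^ 2) \<le> (if j < 2*m+2 then 16 * eta * (2*r)^2 else 0) + 144 * (real m + 1)^2 * eta^3 * (2*r)^2"
      proof (cases "j < 2*m+2")
        case True
        have h0: "0 \<le> 144 * (real m + 1)^2 * eta^3 * (2*r)^2" using e0 by simp
        have jN: "j \<le> N" using j k by simp
        have h1: "cmod (Z (Suc j)) ^ 2 - cmod (Z j) ^ 2 \<ge> - 16 * eta * (2*r)^2"
          by (rule inc_lo_early[where K=N and M="2*r", OF bN jN])
        have "(if j < 2*m+2 then 16 * eta * (2*r)^2 else 0) = 16 * eta * (2*r)^2" using True by simp
        then show ?thesis using h0 h1 by linarith
      next
        case False
        have h0: "0 \<le> 4 * eta^2 * cmod (Z j) ^ 2" by simp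
        have jN: "j \<le> N" using j k by simp
        have h1: "cmod (Z (Suc j)) ^ 2 - cmod (Z j) ^ 2 \<ge> 4 * eta^2 * cmod (Z j) ^ 2 - 144 * (real m + 1)^2 * eta^3 * (2*r)^2"
          using inc_lo_late[where K=N and M="2*r", OF bN _ jN] False by simp
        have "(if j < 2*m+2 then 16 * eta * (2*r)^2 else 0) = 0" using False by simp
        then show ?thesis using h0 h1 by linarith
      qed
    qed (use e0 in auto)
    also have "\<dots> \<le> r^2 / 2"
    proof -
      have a: "real (2*m+2) * (16 * eta * (2*r)^2) = (128 * (real m + 1) * eta) * r^2"
        by (simp add: power2_eq_square algebra_simps)
      have a2: "(128 * (real m + 1) * eta) * r^2 \<le> (1/4) * r^2" using c1 by (intro mult_right_mono) auto
      have b: "real k * (144 * (real m + 1)^2 * eta^3 * (2*r)^2) = (576 * (real m + 1)^2 * real k * eta^3) * r^2"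
        by (simp add: power2_eq_square algebra_simps)
      have "576 * (real m + 1)^2 * real k * eta^3 \<le> 576 * (real m + 1)^2 * real N * eta^3"
        using k e0 by (intro mult_right_mono mult_left_mono) auto
      then have "576 * (real m + 1)^2 * real k * eta^3 \<le> 1/4" using c3 by linarith
      then have b2: "(576 * (real m + 1)^2 * real k * eta^3) * r^2 \<le> (1/4) * r^2"
        by (intro mult_right_mono) auto
      show ?thesis using a a2 b b2 by linarith
    qed
    finally have "(\<Sum>j<k. - (cmod (Z (Suc j)) ^ 2 - cmod (Z j) ^ 2)) \<le> r^2 / 2" .
    moreover have "cmod (Z k) ^ 2 - r ^ 2 = (\<Sum>j<k. cmod (Z (Suc j)) ^ 2 - cmod (Z j) ^ 2)"
      using telsq[of k] r by simp
    ultimately show ?thesis using sum_negf[of "\<lambda>j. cmod (Z (Suc j)) ^ 2 - cmod (Z j) ^ 2" "{..<k}"] by linarith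
  qed
  have grow: "cmod (Z N) ^ 2 - r^2 \<ge> real N * eta^2 * r^2 / 2"
  proof -
    have "(\<Sum>j<N. - (cmod (Z (Suc j)) ^ 2 - cmod (Z j) ^ 2))
        \<le> real (2*m+2) * (64 * eta * r^2 + 2 * eta^2 * r^2) + real N * (576 * (real m + 1)^2 * eta^3 * r^2 - 2 * eta^2 * r^2)"
    proof (rule step_sum_le)
      fix j assume j: "j < N"
      show "- (cmod (Z (Suc j)) ^ 2 - cmod (Z j) ^ 2) \<le> (if j < 2*m+2 then 64 * eta * r^2 + 2 * eta^2 * r^2 else 0) + (576 * (real m + 1)^2 * eta^3 * r^2 - 2 * eta^2 * r^2)"
      proof (cases "j < 2*m+2")
        case True
        have "0 \<le> 576 * (real m + 1)^2 * eta^3 * r^2" using e0 by simp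
        moreover have "- (cmod (Z (Suc j)) ^ 2 - cmod (Z j) ^ 2) \<le> 16 * eta * (2*r)^2"
          using inc_lo_early[where K=N and M="2*r", OF bN, of j] j by auto
        ultimately show ?thesis using True by (simp add: power2_eq_square algebra_simps)
      next
        case False
        have "4 * eta^2 * (r^2/2) \<le> 4 * eta^2 * cmod (Z j) ^ 2"
          using lo[of j] j by (intro mult_left_mono) auto
        moreover have "- (cmod (Z (Suc j)) ^ 2 - cmod (Z j) ^ 2) \<le> - (4 * eta^2 * cmod (Z j) ^ 2) + 144 * (real m + 1)^2 * eta^3 * (2*r)^2"
          using inc_lo_late[where K=N and M="2*r", OF bN, of j] j False by auto
        ultimately show ?thesis using False by (simp add: power2_eq_square algebra_simps)
      qed
    qed (use e0 r in auto)
    also have "\<dots> \<le> - (real N * eta^2 * r^2 / 2)"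
    proof -
      have a: "576 * (real m + 1)^2 * real N * eta^3 \<le> real N * eta^2 / 2"
      proof -
        have "(576 * (real m + 1)^2 * eta) * (real N * eta^2) \<le> (1/2) * (real N * eta^2)"
          using c4 by (intro mult_right_mono) auto
        then show ?thesis by (simp add: power2_eq_square power3_eq_cube algebra_simps)
      qed
      have b: "(2 * real m + 2) * (64 + 2 * eta) * eta \<le> real N * eta * eta"
        using c5 e0 by (intro mult_right_mono) auto
      have "real (2*m+2) * (64 * eta * r^2 + 2 * eta^2 * r^2) + real N * (576 * (real m + 1)^2 * eta^3 * r^2 - 2 * eta^2 * r^2)
          = ((2 * real m + 2) * (64 + 2 * eta) * eta + 576 * (real m + 1)^2 * real N * eta^3 - 2 * real N * eta^2) * r^2"
        by (simp add: power2_eq_square power3_eq_cube algebra_simps)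
      also have "\<dots> \<le> (- (real N * eta^2 / 2)) * r^2"
        using a b by (intro mult_right_mono) (auto simp: power2_eq_square)
      finally show ?thesis by simp
    qed
    finally have "(\<Sum>j<N. - (cmod (Z (Suc j)) ^ 2 - cmod (Z j) ^ 2)) \<le> - (real N * eta^2 * r^2 / 2)" .
    moreover have "cmod (Z N) ^ 2 - r ^ 2 = (\<Sum>j<N. cmod (Z (Suc j)) ^ 2 - cmod (Z j) ^ 2)"
      using telsq[of N] r by simp
    ultimately show ?thesis using sum_negf[of "\<lambda>j. cmod (Z (Suc j)) ^ 2 - cmod (Z j) ^ 2" "{..<N}"] by linarith
  qed
  have dN: "cmod (Z N - Z 0) \<ge> real N * eta^2 * r / 6"
  proof -
    define x where "x = cmod (Z N)"
    have x2: "x \<le> 2 * r" using bN[of N] x_def by simp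
    have g: "(x - r) * (x + r) \<ge> real N * eta^2 * r^2 / 2"
      using grow x_def by (simp add: power2_eq_square algebra_simps)
    have "0 \<le> real N * eta^2 * r^2 / 2" by simp
    have xp: "x + r > 0" using r x_def by (simp add: add_nonneg_pos)
    have xr: "x \<ge> r"
    proof (rule ccontr)
      assume "\<not> x \<ge> r"
      then have "(x - r) * (x + r) < 0" using xp by (intro mult_neg_pos) auto
      then show False using g \<open>0 \<le> real N * eta^2 * r^2 / 2\<close> by linarith
    qed
    have "(x - r) * (x + r) \<le> (x - r) * (3 * r)"
      using xr x2 by (intro mult_left_mono) auto
    then have "real N * eta^2 * r^2 / 2 \<le> (x - r) * (3 * r)" using g by linarith
    then have "real N * eta^2 * r / 6 * r \<le> (x - r) * r"
      by (simp add: power2_eq_square algebra_simps)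
    then have "real N * eta^2 * r / 6 \<le> x - r"
      using r by (simp add: mult_le_cancel_right)
    moreover have "x - r \<le> cmod (Z N - Z 0)"
      using r x_def norm_triangle_ineq2[of "Z N" "Z 0"] by simp
    ultimately show ?thesis by linarith
  qed
  have pos_of_nat_m: "0 \<le> real m" by simp
  have c7': "48 * real m + 144 \<le> real N * eta" using c7 by (simp add: algebra_simps)
  have Nge: "m + 1 \<le> N"
  proof -
    have "0 \<le> real m * eta" using e0 by simp
    then have "eta \<le> (real m + 1) * eta" by (simp add: algebra_simps)
    then have "eta \<le> 1" using c1 by linarith
    then have "real N * eta \<le> real N" using e0 by (simp add: mult_left_le)
    then have "real m + 1 \<le> real N" using c7' pos_of_nat_m by linarith
    then have "real (m + 1) \<le> real N" by simp
    then show ?thesis by (simp only: of_nat_le_iff)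
  qed
  define n where "n = N - (m + 1)"
  have Nn: "N = n + m + 1" using Nge n_def by simp
  have "Z N - Z 0 = (\<Sum>k<N. D k)" by (simp add: sum_lessThan_telescope)
  also have "\<dots> = (\<Sum>k<N. - (2 * \<i> * of_real eta) * (2 * Bf Z m k - Cf Z m k))"
    by (simp add: rec)
  also have "\<dots> = - (2 * \<i> * of_real eta) * (2 * (\<Sum>k<N. Bf Z m k) - (\<Sum>k<N. Cf Z m k))"
  proof -
    have "(\<Sum>k<N. 2 * Bf Z m k - Cf Z m k) = 2 * (\<Sum>k<N. Bf Z m k) - (\<Sum>k<N. Cf Z m k)"
      by (simp add: sum_subtractf sum_distrib_left)
    moreover have "(\<Sum>k<N. - (2 * \<i> * of_real eta) * (2 * Bf Z m k - Cf Z m k))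
        = - (2 * \<i> * of_real eta) * (\<Sum>k<N. 2 * Bf Z m k - Cf Z m k)"
      by (rule sum_distrib_left[symmetric])
    ultimately show ?thesis by simp
  qed
  also have "(\<Sum>k<N. Bf Z m k) = (\<Sum>j<Suc n. Z j)"
    using sumB[of "Suc n"] Nn by simp
  also have "(\<Sum>k<N. Cf Z m k) = (\<Sum>j<n. Z j)"
    using sumC[of n] Nn by simp
  finally have id: "Z N - Z 0 = - (2 * \<i> * of_real eta) * ((\<Sum>j<n. Z j) + 2 * Z n)"
    by (simp add: algebra_simps)
  have s1: "cmod ((\<Sum>j<n. Z j) + 2 * Z n) \<ge> real N * eta * r / 12"
  proof -
    have "cmod (Z N - Z 0) = 2 * eta * cmod ((\<Sum>j<n. Z j) + 2 * Z n)"
      unfolding id using e0 by (simp add: norm_mult)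
    then have "real N * eta^2 * r / 6 \<le> 2 * eta * cmod ((\<Sum>j<n. Z j) + 2 * Z n)" using dN by simp
    then have "eta * (real N * eta * r / 12) \<le> eta * cmod ((\<Sum>j<n. Z j) + 2 * Z n)"
      by (simp add: power2_eq_square algebra_simps)
    then show ?thesis using e0 by (simp add: mult_le_cancel_left)
  qed
  have split: "(\<Sum>k<N. Z k) = ((\<Sum>j<n. Z j) + 2 * Z n) - 2 * Z n + (\<Sum>k\<in>{n..<N}. Z k)"
  proof -
    have "(\<Sum>k<N. Z k) = (\<Sum>j<n. Z j) + (\<Sum>k\<in>{n..<N}. Z k)"
      using Nn by (simp add: lessThan_atLeast0 sum.atLeastLessThan_concat)
    then show ?thesis by simp
  qed
  have t1: "cmod (2 * Z n) \<le> 4 * r"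
  proof -
    have "cmod (2 * Z n) = 2 * cmod (Z n)" by (simp add: norm_mult)
    moreover have "cmod (Z n) \<le> 2 * r" using bN[of n] Nn by simp
    ultimately show ?thesis by linarith
  qed
  have t2: "cmod (\<Sum>k\<in>{n..<N}. Z k) \<le> (\<Sum>k\<in>{n..<N}. 2 * r)"
  proof (rule sum_norm_le)
    fix k assume "k \<in> {n..<N}"
    then show "cmod (Z k) \<le> 2 * r" using bN[of k] by simp
  qed
  have t2': "(\<Sum>k\<in>{n..<N}. 2 * r) = (real m + 1) * (2 * r)" using Nn by simp
  have "cmod (\<Sum>k<N. Z k) \<ge> cmod ((\<Sum>j<n. Z j) + 2 * Z n) - cmod (2 * Z n) - cmod (\<Sum>k\<in>{n..<N}. Z k)"
  proof -
    have gen: "cmod (A - B + C) \<ge> cmod A - cmod B - cmod C" for A B C :: complex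
    proof -
      have "cmod A - cmod B \<le> cmod (A - B)" by (rule norm_triangle_ineq2)
      moreover have "cmod (A - B) - cmod C \<le> cmod (A - B + C)"
        using norm_triangle_ineq2[of "A - B" "- C"] by simp
      ultimately show ?thesis by linarith
    qed
    show ?thesis unfolding split by (rule gen)
  qed
  then have "cmod (\<Sum>k<N. Z k) \<ge> real N * eta * r / 12 - 4 * r - (real m + 1) * (2 * r)"
    using s1 t1 t2 t2' by linarith
  moreover have "real N * eta * r / 24 \<le> real N * eta * r / 12 - 4 * r - (real m + 1) * (2 * r)"
  proof -
    have "48 * (real m + 3) * r \<le> real N * eta * r" using c7 r0 by (intro mult_right_mono) auto
    then show ?thesis by (simp add: algebra_simps)
  qed
  ultimately show "cmod (\<Sum>k<N. Z k) \<ge> real N * eta * r / 24" by linarith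
  have "(\<Sum>j<N. F j) = (Z N ^ 2 - Z 0 ^ 2) + 4 * \<i> * of_real eta * (\<Sum>j<N. Z j ^ 2)"
  proof -
    have "(\<Sum>j<N. Z (Suc j) ^ 2 - Z j ^ 2) = Z N ^ 2 - Z 0 ^ 2"
      by (rule sum_lessThan_telescope)
    then show ?thesis by (simp add: sum.distrib sum_distrib_left)
  qed
  then have sq: "4 * \<i> * of_real eta * (\<Sum>j<N. Z j ^ 2) = (\<Sum>j<N. F j) - (Z N ^ 2 - Z 0 ^ 2)"
    by simp
  have Fs: "cmod (\<Sum>j<N. F j) \<le> 3 * r^2"
  proof -
    have "cmod (\<Sum>j<N. F j) \<le> (\<Sum>j<N. cmod (F j))" by (rule norm_sum)
    also have "\<dots> \<le> 3 * r^2"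
    proof (rule sumbd)
      fix j assume "j < N"
      then show "cmod (F j) \<le> (if j < m + 1 then 16 * eta * (2*r)^2 else 0) + (24 * (real m + 1) + 36) * eta^2 * (2*r)^2"
        using F_bd[where K=N and M="2*r", OF bN, of j] by simp
    qed simp
    finally show ?thesis .
  qed
  have ZZ: "cmod (Z N ^ 2 - Z 0 ^ 2) \<le> 5 * r^2"
  proof -
    have "cmod (Z N ^ 2 - Z 0 ^ 2) \<le> cmod (Z N) ^ 2 + cmod (Z 0) ^ 2"
      using norm_triangle_ineq4[of "Z N ^ 2" "Z 0 ^ 2"] by (simp add: norm_power)
    also have "cmod (Z N) ^ 2 \<le> (2 * r)^2" using bN[of N] by (intro power_mono) auto
    finally show ?thesis using r by (simp add: power2_eq_square)
  qed
  have sqb: "cmod (\<Sum>j<N. Z j ^ 2) \<le> 2 * r^2 / eta"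
  proof -
    have "4 * eta * cmod (\<Sum>j<N. Z j ^ 2) = cmod (4 * \<i> * of_real eta * (\<Sum>j<N. Z j ^ 2))"
      using e0 by (simp add: norm_mult)
    also have "\<dots> \<le> cmod (\<Sum>j<N. F j) + cmod (Z N ^ 2 - Z 0 ^ 2)" unfolding sq by (rule norm_triangle_ineq4)
    finally have "4 * eta * cmod (\<Sum>j<N. Z j ^ 2) \<le> 8 * r^2" using Fs ZZ by linarith
    then have "cmod (\<Sum>j<N. Z j ^ 2) * eta \<le> 2 * r^2" by (simp add: algebra_simps)
    then show ?thesis using e0 by (simp add: le_divide_eq)
  qed
  have sumsq: "(\<Sum>j<N. cmod (Z j) ^ 2) \<ge> real N * r^2 / 2"
  proof -
    have "(\<Sum>j<N. r^2 / 2) \<le> (\<Sum>j<N. cmod (Z j) ^ 2)"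
    proof (rule sum_mono)
      fix j assume "j \<in> {..<N}"
      then show "r^2 / 2 \<le> cmod (Z j) ^ 2" using lo[of j] by simp
    qed
    then show ?thesis by simp
  qed
  define SR where "SR = (\<Sum>j<N. Re (Z j ^ 2))"
  have SR_eq: "Re (\<Sum>j<N. Z j ^ 2) = SR" unfolding SR_def by (rule Re_sum)
  have N8: "8 \<le> real N * eta" using c7' pos_of_nat_m by linarith
  have ReS: "\<bar>SR\<bar> \<le> real N * r^2 / 4"
  proof -
    have "8 * r^2 \<le> (real N * eta) * r^2" using N8 by (intro mult_right_mono) auto
    then have "2 * r^2 \<le> (real N * r^2 / 4) * eta" by (simp add: algebra_simps)
    then have "2 * r^2 / eta \<le> real N * r^2 / 4" using e0 by (simp add: pos_divide_le_eq)
    moreover have "\<bar>SR\<bar> \<le> cmod (\<Sum>j<N. Z j ^ 2)" using abs_Re_le_cmod[of "\<Sum>j<N. Z j ^ 2"] SR_eq by simp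
    ultimately show ?thesis using sqb by linarith
  qed
  have absq: "x^2 / (2 * r) \<le> \<bar>x\<bar>" if "\<bar>x\<bar> \<le> 2 * r" for x :: real
  proof -
    have "x^2 = \<bar>x\<bar> * \<bar>x\<bar>" by (simp add: power2_eq_square)
    also have "\<dots> \<le> \<bar>x\<bar> * (2 * r)" using that by (intro mult_left_mono) auto
    finally have "x^2 \<le> \<bar>x\<bar> * (2 * r)" .
    then show ?thesis using r by (simp add: pos_divide_le_eq)
  qed
  have ptR: "Re z ^ 2 = (cmod z ^ 2 + Re (z ^ 2)) / 2" for z :: complex
    unfolding cmod_power2 by (simp add: power2_eq_square algebra_simps)
  have ptI: "Im z ^ 2 = (cmod z ^ 2 - Re (z ^ 2)) / 2" for z :: complex
    unfolding cmod_power2 by (simp add: power2_eq_square algebra_simps)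
  have ReZ: "(\<Sum>j<N. Re (Z j) ^ 2) = ((\<Sum>j<N. cmod (Z j) ^ 2) + SR) / 2"
  proof -
    have "(\<Sum>j<N. Re (Z j) ^ 2) = (\<Sum>j<N. (cmod (Z j) ^ 2 + Re (Z j ^ 2)) / 2)"
      by (rule sum.cong[OF refl]) (rule ptR)
    also have "\<dots> = ((\<Sum>j<N. cmod (Z j) ^ 2) + SR) / 2"
      unfolding SR_def by (simp only: sum_divide_distrib[symmetric] sum.distrib)
    finally show ?thesis .
  qed
  have ImZ: "(\<Sum>j<N. Im (Z j) ^ 2) = ((\<Sum>j<N. cmod (Z j) ^ 2) - SR) / 2"
  proof -
    have "(\<Sum>j<N. Im (Z j) ^ 2) = (\<Sum>j<N. (cmod (Z j) ^ 2 - Re (Z j ^ 2)) / 2)"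
      by (rule sum.cong[OF refl]) (rule ptI)
    also have "\<dots> = ((\<Sum>j<N. cmod (Z j) ^ 2) - SR) / 2"
      unfolding SR_def by (simp only: sum_divide_distrib[symmetric] sum_subtractf)
    finally show ?thesis .
  qed
  have fin: "real N * r / 16 \<le> (\<Sum>k<N. \<bar>f (Z k)\<bar>)"
    if f: "\<And>z. \<bar>f z\<bar> \<le> cmod z" and fs: "(\<Sum>j<N. f (Z j) ^ 2) \<ge> real N * r^2 / 8" for f :: "complex \<Rightarrow> real"
  proof -
    have "(\<Sum>j<N. f (Z j) ^ 2 / (2 * r)) \<le> (\<Sum>j<N. \<bar>f (Z j)\<bar>)"
    proof (rule sum_mono)
      fix j assume "j \<in> {..<N}"
      then have "\<bar>f (Z j)\<bar> \<le> 2 * r" using bN[of j] f[of "Z j"] by simp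
      then show "f (Z j) ^ 2 / (2 * r) \<le> \<bar>f (Z j)\<bar>" by (rule absq)
    qed
    moreover have "(\<Sum>j<N. f (Z j) ^ 2 / (2 * r)) = (\<Sum>j<N. f (Z j) ^ 2) / (2 * r)"
      by (simp add: sum_divide_distrib)
    moreover have "(real N * r^2 / 8) / (2 * r) \<le> (\<Sum>j<N. f (Z j) ^ 2) / (2 * r)"
      using fs r by (intro divide_right_mono) auto
    moreover have "(real N * r^2 / 8) / (2 * r) = real N * r / 16"
      using r by (simp add: power2_eq_square)
    ultimately show ?thesis by linarith
  qed
  have "(\<Sum>j<N. Re (Z j) ^ 2) \<ge> real N * r^2 / 8" 
  proof -
    have "2 * (\<Sum>j<N. Re (Z j) ^ 2) = (\<Sum>j<N. cmod (Z j) ^ 2) + SR" using ReZ by simp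
    then show ?thesis using sumsq ReS[unfolded abs_le_iff] by (elim conjE) linarith
  qed
  then show "(\<Sum>k<N. \<bar>Re (Z k)\<bar>) \<ge> real N * r / 16"
    using fin[of Re] abs_Re_le_cmod by blast
  have "(\<Sum>j<N. Im (Z j) ^ 2) \<ge> real N * r^2 / 8" 
  proof -
    have "2 * (\<Sum>j<N. Im (Z j) ^ 2) = (\<Sum>j<N. cmod (Z j) ^ 2) - SR" using ImZ by simp
    then show ?thesis using sumsq ReS[unfolded abs_le_iff] by (elim conjE) linarith
  qed
  then show "(\<Sum>k<N. \<bar>Im (Z k)\<bar>) \<ge> real N * r / 16"
    using fin[of Im] abs_Im_le_cmod by blast
qed

end



lemma sum1T: "(\<Sum>t=1..T. h t) = (\<Sum>k<T. h (Suc k))"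
  using sum.atLeast1_atMost_eq[of h T] by simp

lemma elem_formula:
  fixes x1 x2 :: "nat \<Rightarrow> real^2" and A :: "nat set"
  shows "(\<Sum>t\<in>A. (y1 - x1 t) \<bullet> util1 (x1 t) (x2 t)) + (\<Sum>t\<in>A. (y2 - x2 t) \<bullet> util2 (x1 t) (x2 t))
    = (y1 \<bullet> cvec) * (\<Sum>t\<in>A. x2 t \<bullet> cvec) - (y2 \<bullet> cvec) * (\<Sum>t\<in>A. x1 t \<bullet> cvec)"
proof -
  have e1: "(y1 - x1 t) \<bullet> util1 (x1 t) (x2 t) = (y1 \<bullet> cvec) * (x2 t \<bullet> cvec) - (x1 t \<bullet> cvec) * (x2 t \<bullet> cvec)" for t
    by (simp add: util1_eq inner_diff_left algebra_simps)
  have e2: "(y2 - x2 t) \<bullet> util2 (x1 t) (x2 t) = - (y2 \<bullet> cvec) * (x1 t \<bullet> cvec) + (x1 t \<bullet> cvec) * (x2 t \<bullet> cvec)" for t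
    by (simp add: util2_eq inner_diff_left algebra_simps)
  show ?thesis
    by (simp add: e1 e2 sum_subtractf sum.distrib sum_distrib_left sum_negf)
qed

lemma reg_lower:
  fixes m :: nat and eta :: real and a b :: "real^2" and T :: nat
  defines "X1 \<equiv> (\<lambda>t. fst (oftrl_traj m 1 eta a b t))"
    and "X2 \<equiv> (\<lambda>t. snd (oftrl_traj m 1 eta a b t))"
  defines "R1 \<equiv> (\<Sum>t=1..T. l1norm (X1 t)) / real T"
    and "R2 \<equiv> (\<Sum>t=1..T. l1norm (X2 t)) / real T"
    and "P \<equiv> (\<Sum>t=1..T. X1 t \<bullet> cvec)"
    and "Q \<equiv> (\<Sum>t=1..T. X2 t \<bullet> cvec)"
  shows "RegTot m 1 eta a b T \<ge> R1 * \<bar>Q\<bar> + R2 * \<bar>P\<bar>"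
proof -
  define S where "S = {(\<Sum>t=1..T. (y1 - X1 t) \<bullet> util1 (X1 t) (X2 t)) + (\<Sum>t=1..T. (y2 - X2 t) \<bullet> util2 (X1 t) (X2 t)) |
               y1 y2. l1norm y1 \<le> R1 \<and> l1norm y2 \<le> R2}"
  have Reg: "RegTot m 1 eta a b T = Sup S"
    unfolding RegTot_def S_def X1_def X2_def R1_def R2_def Let_def by simp
  have ef: "(\<Sum>t=1..T. (y1 - X1 t) \<bullet> util1 (X1 t) (X2 t)) + (\<Sum>t=1..T. (y2 - X2 t) \<bullet> util2 (X1 t) (X2 t))
      = (y1 \<bullet> cvec) * Q - (y2 \<bullet> cvec) * P" for y1 y2
    unfolding P_def Q_def by (rule elem_formula)
  have R1n: "0 \<le> R1" unfolding R1_def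
    by (intro divide_nonneg_nonneg sum_nonneg) (auto simp: l1norm_def)
  have R2n: "0 \<le> R2" unfolding R2_def
    by (intro divide_nonneg_nonneg sum_nonneg) (auto simp: l1norm_def)
  have bdd: "bdd_above S"
  proof (rule bdd_aboveI)
    fix x assume "x \<in> S"
    then obtain y1 y2 :: "real^2" where y: "l1norm y1 \<le> R1" "l1norm y2 \<le> R2"
      and x: "x = (y1 \<bullet> cvec) * Q - (y2 \<bullet> cvec) * P" unfolding S_def ef by blast
    have "(y1 \<bullet> cvec) * Q \<le> \<bar>y1 \<bullet> cvec\<bar> * \<bar>Q\<bar>" by (metis abs_ge_self abs_mult)
    also have "\<dots> \<le> R1 * \<bar>Q\<bar>" using l1_ge[of y1] y(1) by (intro mult_right_mono) auto
    finally have h1: "(y1 \<bullet> cvec) * Q \<le> R1 * \<bar>Q\<bar>" .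
    have "- ((y2 \<bullet> cvec) * P) \<le> \<bar>y2 \<bullet> cvec\<bar> * \<bar>P\<bar>" by (metis abs_ge_minus_self abs_mult)
    also have "\<dots> \<le> R2 * \<bar>P\<bar>" using l1_ge[of y2] y(2) by (intro mult_right_mono) auto
    finally have h2: "- ((y2 \<bullet> cvec) * P) \<le> R2 * \<bar>P\<bar>" .
    show "x \<le> R1 * \<bar>Q\<bar> + R2 * \<bar>P\<bar>" using x h1 h2 by linarith
  qed
  define y1 :: "real^2" where "y1 = (R1 * sgn Q) *\<^sub>R axis 1 (1::real)"
  define y2 :: "real^2" where "y2 = (- (R2 * sgn P)) *\<^sub>R axis 1 (1::real)"
  have "l1norm y1 \<le> R1" unfolding y1_def l1_axis using R1n by (simp add: abs_mult abs_sgn_eq)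
  moreover have "l1norm y2 \<le> R2" unfolding y2_def l1_axis using R2n by (simp add: abs_mult abs_sgn_eq)
  ultimately have "(y1 \<bullet> cvec) * Q - (y2 \<bullet> cvec) * P \<in> S"
    unfolding S_def ef by blast
  moreover have "(y1 \<bullet> cvec) * Q - (y2 \<bullet> cvec) * P = R1 * \<bar>Q\<bar> + R2 * \<bar>P\<bar>"
    unfolding y1_def y2_def axis_c by (simp add: abs_sgn mult.assoc sgn_mult_abs algebra_simps)
  ultimately have "R1 * \<bar>Q\<bar> + R2 * \<bar>P\<bar> \<le> Sup S" using bdd by (metis cSup_upper)
  then show ?thesis using Reg by simp
qed



lemma traj1: "oftrl_traj m n eta a b (Suc 0) = (a, b)"
  by (subst oftrl_traj.simps) simp

theorem theorem1:
  fixes m :: nat and a b :: "real^2"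
  assumes "m \<ge> 1"
    and "(a \<bullet> cvec, b \<bullet> cvec) \<noteq> (0, 0)"
  shows "\<exists>c0>0. \<forall>c. 0 < c \<and> c \<le> c0 \<longrightarrow>
           (\<exists>\<kappa>>0. \<exists>T0. \<forall>T\<ge>T0.
              RegTot m 1 (c / sqrt (real T)) a b T \<ge> \<kappa> * sqrt (real T))"
proof -
  define u where "u = real m + 1"
  define w where "w = real m + 3"
  have u1: "2 \<le> u" using assms(1) unfolding u_def by simp
  have uw: "u \<le> w" unfolding u_def w_def by simp
  define c0 :: real where "c0 = 1 / (20 * u)"
  have c0pos: "c0 > 0" using u1 unfolding c0_def by simp
  define r where "r = cmod (Complex (a \<bullet> cvec) (b \<bullet> cvec))"
  have rpos: "r > 0" using assms(2) unfolding r_def by (auto simp: complex_eq_iff)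
  show ?thesis
  proof (rule exI[of _ c0], intro conjI allI impI)
    show "c0 > 0" by (rule c0pos)
    fix c :: real assume cc: "0 < c \<and> c \<le> c0"
    have cpos: "0 < c" and cle: "c \<le> c0" using cc by auto
    have c20: "c * (20 * u) \<le> 1" using cle u1 unfolding c0_def by (simp add: field_simps)
    have "c * 1 \<le> c * (20 * u)" using cpos u1 by (intro mult_left_mono) auto
    then have c1: "c \<le> 1" using c20 by linarith
    have csq: "c^2 * (400 * u^2) \<le> 1"
    proof -
      have "c * (20 * u) \<le> 1" using cle u1 unfolding c0_def by (simp add: field_simps)
      moreover have "0 \<le> c * (20 * u)" using cpos u1 by simp
      ultimately have "(c * (20 * u))^2 \<le> 1^2" by (intro power_mono) auto
      then show ?thesis by (simp add: power2_eq_square algebra_simps)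
    qed
    define L where "L = 2000 * w^2 / c"
    have Lpos: "L > 0" unfolding L_def using cpos uw u1 by simp
    define T0 where "T0 = nat \<lceil>L^2\<rceil>"
    show "\<exists>\<kappa>>0. \<exists>T0. \<forall>T\<ge>T0. RegTot m 1 (c / sqrt (real T)) a b T \<ge> \<kappa> * sqrt (real T)"
    proof (intro exI[of _ "c * r^2 / 384"] conjI exI[of _ T0] allI impI)
      show "c * r^2 / 384 > 0" using cpos rpos by simp
      fix T :: nat assume TT: "T0 \<le> T"
      have "L^2 \<le> real T" using TT unfolding T0_def by linarith
      then have "sqrt (L^2) \<le> sqrt (real T)" by (rule real_sqrt_le_mono)
      then have sL: "L \<le> sqrt (real T)" using Lpos by simp
      define s where "s = sqrt (real T)"
      have spos: "s > 0" using sL Lpos s_def by linarith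
      have ss: "s * s = real T" unfolding s_def using spos s_def by simp
      define eta where "eta = c / s"
      have epos: "eta > 0" unfolding eta_def using cpos spos by simp
      have Neta: "real T * eta = c * s" unfolding eta_def using spos ss[symmetric] by (simp add: field_simps)
      have Neta2: "real T * eta^2 = c^2" unfolding eta_def using spos ss[symmetric] by (simp add: field_simps power2_eq_square)
      have cs: "c * s \<ge> 2000 * w^2" using sL cpos unfolding L_def s_def by (simp add: field_simps)
      have eta_small: "eta * (2000 * w^2) \<le> c^2"
      proof -
        have "eta * (2000 * w^2) \<le> eta * (c * s)" using cs epos by (intro mult_left_mono) auto
        also have "\<dots> = c^2" unfolding eta_def using spos by (simp add: power2_eq_square)
        finally show ?thesis .
      qed
      have u2eta: "u^2 * eta \<le> 1 / 2000"
      proof -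
        have "u^2 \<le> w^2" using uw u1 by (intro power_mono) auto
        then have "u^2 * eta * 2000 \<le> w^2 * eta * 2000" using epos by (intro mult_right_mono) auto
        also have "\<dots> \<le> c^2" using eta_small by (simp add: algebra_simps)
        also have "\<dots> \<le> 1" using c1 cpos by (simp add: power_le_one)
        finally show ?thesis by simp
      qed
      have ueta: "u * eta \<le> 1 / 2000"
      proof -
        have "u * eta \<le> u^2 * eta" using u1 epos by (intro mult_right_mono) (auto simp: power2_eq_square)
        then show ?thesis using u2eta by linarith
      qed
      have "1 * eta \<le> u * eta" using u1 epos by (intro mult_right_mono) auto
      then have eta1: "eta \<le> 1" using ueta by linarith
      define X where "X = oftrl_traj m 1 eta a b"
      define Z where "Z = (\<lambda>k. Complex (fst (X (Suc k)) \<bullet> cvec) (snd (X (Suc k)) \<bullet> cvec))"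
      have ReB: "Re (Bf Z m k) = (if m \<le> k then fst (X (Suc (k - m))) \<bullet> cvec else 0)"
        and ImB: "Im (Bf Z m k) = (if m \<le> k then snd (X (Suc (k - m))) \<bullet> cvec else 0)"
        and ReC: "Re (Cf Z m k) = (if m < k then fst (X (Suc (k - Suc m))) \<bullet> cvec else 0)"
        and ImC: "Im (Cf Z m k) = (if m < k then snd (X (Suc (k - Suc m))) \<bullet> cvec else 0)" for k
        by (simp_all add: Bf_def Cf_def Z_def)
      have ZRe: "Re (Z j) = fst (X (Suc j)) \<bullet> cvec" and ZIm: "Im (Z j) = snd (X (Suc j)) \<bullet> cvec" for j
        by (simp_all add: Z_def)
      interpret osc Z m eta
      proof
        show "0 < eta" by (rule epos)
        show "1 \<le> m" by (rule assms(1))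
        fix k
        show "Z (Suc k) = Z k - 2 * \<i> * complex_of_real eta * (2 * Bf Z m k - Cf Z m k)"
          unfolding complex_eq_iff
          using traj_step[of m eta a b k] unfolding X_def[symmetric]
          by (simp add: ReB ImB ReC ImC ZRe ZIm)
      qed
      have Z0: "cmod (Z 0) = r" unfolding Z_def X_def r_def by (simp add: traj1)
      have k1: "128 * u * eta \<le> 1/4" using ueta by (simp add: algebra_simps)
        have k2: "real T * (24 * real m + 60) * eta^2 \<le> 1/2"
        proof -
          have "real T * (24 * real m + 60) * eta^2 = (24 * real m + 60) * (real T * eta^2)" by (simp only: mult_ac)
          also have "\<dots> = (24 * real m + 60) * c^2" by (simp only: Neta2)
          also have "\<dots> \<le> (60 * u^2) * c^2" using u1 unfolding u_def
            by (intro mult_right_mono) (auto simp: power2_eq_square algebra_simps)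
          also have "\<dots> = (3/20) * (c^2 * (400 * u^2))" by (simp add: algebra_simps)
          also have "\<dots> \<le> (3/20) * 1" using csq by (intro mult_left_mono) auto
          finally show ?thesis by simp
        qed
        have k3: "576 * u^2 * real T * eta^3 \<le> 1/4"
        proof -
          have "576 * u^2 * real T * eta^3 = 576 * (u^2 * eta) * (real T * eta^2)" by (simp add: power2_eq_square power3_eq_cube algebra_simps)
          also have "\<dots> \<le> 576 * (1/2000) * (real T * eta^2)"
            using u2eta by (intro mult_right_mono mult_left_mono) auto
          also have "real T * eta^2 \<le> 1/1600"
          proof -
            have "(2::real)^2 \<le> u^2" using u1 by (intro power_mono) auto
            then have "c^2 * 1600 \<le> c^2 * (400 * u^2)" by (intro mult_left_mono) auto
            then show ?thesis using Neta2 csq by linarith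
          qed
          then have "576 * (1/2000) * (real T * eta^2) \<le> 576 * (1/2000) * (1/1600)" by (intro mult_left_mono) auto
          finally have h: "576 * u^2 * real T * eta^3 \<le> 576 * (1/2000) * (1/1600)" .
          have "576 * (1/2000) * (1/1600) \<le> (1/4::real)" by simp
          then show ?thesis using h by linarith
        qed
        have k4: "576 * u^2 * eta \<le> 1/2" using u2eta by simp
        have k5: "(2 * real m + 2) * (64 + 2 * eta) \<le> real T * eta"
        proof -
          have "(2 * real m + 2) * (64 + 2 * eta) \<le> (2 * real m + 2) * 66"
            using eta1 by (intro mult_left_mono) auto
          also have "\<dots> = (2 * u) * 66" unfolding u_def by (simp add: algebra_simps)
          also have "\<dots> \<le> 2000 * w^2"
          proof -
            have "w \<le> w^2" using uw u1 by (simp add: power2_eq_square)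
            then show ?thesis using uw u1 zero_le_power2[of w] by linarith
          qed
          also have "\<dots> \<le> real T * eta" using cs Neta by simp
          finally show ?thesis .
        qed
        have k6: "48 * w \<le> real T * eta"
        proof -
          have "w \<le> w^2" using uw u1 by (simp add: power2_eq_square)
          then show ?thesis using cs Neta uw u1 by simp
        qed
      note mainres = main[OF Z0 rpos k1[unfolded u_def] k2 k3[unfolded u_def] k4[unfolded u_def] k5 k6[unfolded w_def]]
      define R1 where "R1 = (\<Sum>t=1..T. l1norm (fst (oftrl_traj m 1 eta a b t))) / real T"
      define R2 where "R2 = (\<Sum>t=1..T. l1norm (snd (oftrl_traj m 1 eta a b t))) / real T"
      define P where "P = (\<Sum>t=1..T. fst (oftrl_traj m 1 eta a b t) \<bullet> cvec)"
      define Q where "Q = (\<Sum>t=1..T. snd (oftrl_traj m 1 eta a b t) \<bullet> cvec)"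
      have Treg: "RegTot m 1 eta a b T \<ge> R1 * \<bar>Q\<bar> + R2 * \<bar>P\<bar>"
        unfolding R1_def R2_def P_def Q_def by (rule reg_lower)
      have Tpos: "real T > 0" using ss spos mult_pos_pos[of s s] by simp
      have R1b: "R1 \<ge> r / 16"
      proof -
        have "(\<Sum>k<T. \<bar>Re (Z k)\<bar>) = (\<Sum>t=1..T. \<bar>fst (X t) \<bullet> cvec\<bar>)"
          unfolding sum1T Z_def by simp
        also have "\<dots> \<le> (\<Sum>t=1..T. l1norm (fst (X t)))" by (rule sum_mono) (rule l1_ge)
        finally have "real T * r / 16 \<le> (\<Sum>t=1..T. l1norm (fst (X t)))" using mainres(1) by linarith
        then show ?thesis unfolding R1_def X_def using Tpos by (simp add: field_simps)
      qed
      have R2b: "R2 \<ge> r / 16"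
      proof -
        have "(\<Sum>k<T. \<bar>Im (Z k)\<bar>) = (\<Sum>t=1..T. \<bar>snd (X t) \<bullet> cvec\<bar>)"
          unfolding sum1T Z_def by simp
        also have "\<dots> \<le> (\<Sum>t=1..T. l1norm (snd (X t)))" by (rule sum_mono) (rule l1_ge)
        finally have "real T * r / 16 \<le> (\<Sum>t=1..T. l1norm (snd (X t)))" using mainres(2) by linarith
        then show ?thesis unfolding R2_def X_def using Tpos by (simp add: field_simps)
      qed
      have PQ: "cmod (\<Sum>k<T. Z k) \<le> \<bar>P\<bar> + \<bar>Q\<bar>"
      proof -
        have "Re (\<Sum>k<T. Z k) = P" unfolding P_def sum1T Re_sum Z_def X_def by simp
        moreover have "Im (\<Sum>k<T. Z k) = Q" unfolding Q_def sum1T Im_sum Z_def X_def by simp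
        ultimately show ?thesis using cmod_le[of "\<Sum>k<T. Z k"] by simp
      qed
      have "(r / 16) * \<bar>Q\<bar> + (r / 16) * \<bar>P\<bar> \<le> R1 * \<bar>Q\<bar> + R2 * \<bar>P\<bar>"
        using R1b R2b by (intro add_mono mult_right_mono) auto
      moreover have "(r / 16) * (real T * eta * r / 24) \<le> (r / 16) * \<bar>Q\<bar> + (r / 16) * \<bar>P\<bar>"
      proof -
        have "(r / 16) * (real T * eta * r / 24) \<le> (r / 16) * (\<bar>P\<bar> + \<bar>Q\<bar>)"
          using mainres(3) PQ rpos by (intro mult_left_mono) auto
        then show ?thesis by (simp add: algebra_simps)
      qed
      moreover have "(r / 16) * (real T * eta * r / 24) = c * r^2 / 384 * s"
        using Neta by (simp add: power2_eq_square algebra_simps)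
      ultimately have "c * r^2 / 384 * s \<le> RegTot m 1 eta a b T" using Treg by linarith
      then show "c * r^2 / 384 * sqrt (real T) \<le> RegTot m 1 (c / sqrt (real T)) a b T"
        unfolding eta_def s_def .
    qed
  qed
qed

end
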